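(* Let $N\ge2$, $d\ge1$, $1\le p\le q\le\infty$, and let $S\subset\mathbb{Z}_N^d$ be a nonempty set for which a $(p,q)$-restriction estimate holds with constant $C_{p,q}>0$. Let $f:\mathbb{Z}_N^d\to\mathbb{C}$ be supported in $E\subset\mathbb{Z}_N^d$, and suppose $$|E|^{1/p}\cdot|S|<\frac{N^d}{2^{1/p}C_{p,q}}.$$ Then $f$ is uniquely determined by the values $\hat f(m)$, $m\notin S$, among signals with at most $|E|$ nonzero entries: if $g:\mathbb{Z}_N^d\to\mathbb{C}$ satisfies $|\{x:g(x)\ne0\}|\le|E|$ and $\hat g(m)=\hat f(m)$ for all $m\notin S$, then $g=f$.
   Context: $\chi(t)=e^{2\pi i t/N}$, $\hat f(m)=N^{-d}\sum_{x\in\mathbb{Z}_N^d}\chi(-x\cdot m)f(x)$. A $(p,q)$-restriction estimate holds for a nonempty $S\subset\mathbb{Z}_N^d$ with constant $C_{p,q}$ if for every $h:\mathbb{Z}_N^d\to\mathbb{C}$, $\big(\frac{1}{|S|}\sum_{m\in S}|\hat h(m)|^q\big)^{1/q}\le C_{p,q}N^{-d}\big(\sum_x|h(x)|^p\big)^{1/p}$ (for $q=\infty$ the left side is $\max_{m\in S}|\hat h(m)|$). The set $S$ is the set of unobserved frequencies. *)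

theory Defs
  imports "HOL-Analysis.Analysis"
begin

text \<open>Points of Z_N^d are represented by functions x :: nat => nat with
  x i < N for i < d and x i = 0 for i >= d (canonical representatives).\<close>

definition ZNd :: "nat \<Rightarrow> nat \<Rightarrow> (nat \<Rightarrow> nat) set" where
  "ZNd N d = {x. (\<forall>i<d. x i < N) \<and> (\<forall>i\<ge>d. x i = 0)}"

definition dotp :: "nat \<Rightarrow> (nat \<Rightarrow> nat) \<Rightarrow> (nat \<Rightarrow> nat) \<Rightarrow> int" where
  "dotp d x m = (\<Sum>i<d. int (x i) * int (m i))"

definition chi :: "nat \<Rightarrow> int \<Rightarrow> complex" where
  "chi N t = exp (2 * of_real pi * \<i> * of_int t / of_nat N)"

definition fourier :: "nat \<Rightarrow> nat \<Rightarrow> ((nat \<Rightarrow> nat) \<Rightarrow> complex) \<Rightarrow> (nat \<Rightarrow> nat) \<Rightarrow> complex" where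
  "fourier N d f m = (1 / of_nat N ^ d) * (\<Sum>x\<in>ZNd N d. chi N (- dotp d x m) * f x)"

definition lp_norm :: "ereal \<Rightarrow> ('a \<Rightarrow> complex) \<Rightarrow> 'a set \<Rightarrow> real" where
  "lp_norm p h A = (if p = \<infinity> then Max ((\<lambda>x. cmod (h x)) ` A)
     else (\<Sum>x\<in>A. cmod (h x) powr real_of_ereal p) powr (1 / real_of_ereal p))"

definition avg_norm :: "ereal \<Rightarrow> ('a \<Rightarrow> complex) \<Rightarrow> 'a set \<Rightarrow> real" where
  "avg_norm q h A = (if q = \<infinity> then Max ((\<lambda>x. cmod (h x)) ` A)
     else ((1 / real (card A)) * (\<Sum>x\<in>A. cmod (h x) powr real_of_ereal q)) powr (1 / real_of_ereal q))"

definition inv_exp :: "ereal \<Rightarrow> real" where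
  "inv_exp p = (if p = \<infinity> then 0 else 1 / real_of_ereal p)"

definition restriction_estimate ::
  "nat \<Rightarrow> nat \<Rightarrow> ereal \<Rightarrow> ereal \<Rightarrow> (nat \<Rightarrow> nat) set \<Rightarrow> real \<Rightarrow> bool" where
  "restriction_estimate N d p q S C \<longleftrightarrow>
     S \<subseteq> ZNd N d \<and> S \<noteq> {} \<and>
     (\<forall>h :: (nat \<Rightarrow> nat) \<Rightarrow> complex.
        avg_norm q (fourier N d h) S \<le> C * (1 / real N ^ d) * lp_norm p h (ZNd N d))"

end

theory Submission
  imports Defs
begin

lemma powr_convex0:
  fixes r :: real assumes r: "r \<ge> 1"
  shows "convex_on {0..} (\<lambda>x::real. x powr r)"
proof (rule convex_on_linorderI)
  fix t x y :: real
  assume t: "0 < t" "t < 1" and x: "x \<in> {0..}" and y: "y \<in> {0..}" and xy: "x < y"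
  show "((1 - t) *\<^sub>R x + t *\<^sub>R y) powr r \<le> (1 - t) * x powr r + t * y powr r"
  proof (cases "x = 0")
    case True
    have "t powr r \<le> t powr 1" using t r by (intro powr_mono') auto
    hence "t powr r \<le> t" using t by simp
    moreover have "(t * y) powr r = t powr r * y powr r" using t y by (simp add: powr_mult)
    ultimately show ?thesis using True y by (simp add: mult_right_mono)
  next
    case False
    hence "x \<in> {0<..}" "y \<in> {0<..}" using x xy by auto
    then show ?thesis using convex_onD[OF powr_convex[OF r]] t by simp
  qed
qed (simp add: convex_real_interval)

lemma chi_add: "chi N (a + b) = chi N a * chi N b"
  unfolding chi_def by (simp add: distrib_left distrib_right add_divide_distrib exp_add)

lemma norm_chi: "norm (chi N t) = 1"
  unfolding chi_def by simp

lemma chi_pow: "chi N (a * int k) = chi N a ^ k"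
proof -
  have "chi N (a * int k) = exp (of_nat k * (2 * of_real pi * \<i> * of_int a / of_nat N))"
    unfolding chi_def by (simp add: algebra_simps)
  thus ?thesis unfolding chi_def by (simp only: exp_of_nat_mult)
qed

lemma geom_chi:
  assumes N: "N > 0" and a: "\<bar>a\<bar> < int N"
  shows "(\<Sum>k<N. chi N (a * int k)) = (if a = 0 then of_nat N else 0)"
proof (cases "a = 0")
  case True then show ?thesis by (simp add: chi_def)
next
  case False
  have ne: "chi N a \<noteq> 1"
  proof
    assume "chi N a = 1"
    then obtain n :: int where n: "Im (2 * of_real pi * \<i> * of_int a / of_nat N) = of_int (2*n) * pi"
      unfolding chi_def exp_eq_1 by blast
    hence "2 * pi * a / N = 2 * n * pi" by simp
    hence "real_of_int a = real_of_int (n * int N)" using N by (simp add: field_simps)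
    hence an: "a = n * int N" by (simp only: of_int_eq_iff)
    hence "n \<noteq> 0" using False by auto
    hence "\<bar>n\<bar> \<ge> 1" by simp
    hence "\<bar>a\<bar> \<ge> int N" using an by (simp add: abs_mult mult_le_cancel_right1)
    thus False using a by simp
  qed
  have pw: "chi N a ^ N = 1"
  proof -
    have "chi N a ^ N = chi N (a * int N)" by (simp add: chi_pow)
    also have "\<dots> = exp ((2 * of_int a * pi) * \<i>)" unfolding chi_def using N by (simp add: field_simps)
    also have "\<dots> = 1" by (rule exp_integer_2pi) simp
    finally show ?thesis .
  qed
  show ?thesis using ne pw False by (simp add: chi_pow sum_gp_strict)
qed

lemma ZNd_0: "ZNd N 0 = {\<lambda>_. 0}"
  unfolding ZNd_def by auto

lemma ZNd_Suc: "ZNd N (Suc d) = (\<lambda>(y,k). y(d:=k)) ` (ZNd N d \<times> {..<N})"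
proof (intro equalityI subsetI)
  fix x assume x: "x \<in> ZNd N (Suc d)"
  have "x = (\<lambda>(y,k). y(d:=k)) (x(d:=0), x d)" by auto
  moreover have "(x(d:=0), x d) \<in> ZNd N d \<times> {..<N}" using x unfolding ZNd_def by auto
  ultimately show "x \<in> (\<lambda>(y,k). y(d:=k)) ` (ZNd N d \<times> {..<N})" by blast
next
  fix x assume "x \<in> (\<lambda>(y,k). y(d:=k)) ` (ZNd N d \<times> {..<N})"
  then show "x \<in> ZNd N (Suc d)" unfolding ZNd_def by (auto simp: less_Suc_eq)
qed

lemma inj_ZNd_Suc: "inj_on (\<lambda>(y,k). y(d:=k)) (ZNd N d \<times> {..<N})"
proof (rule inj_onI, clarify)
  fix y k y' k' assume a: "y \<in> ZNd N d" "y' \<in> ZNd N d" "y(d := k) = y'(d := k')"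
  have "k = k'" using fun_cong[OF a(3), of d] by simp
  moreover have "y = y'"
  proof
    fix i show "y i = y' i"
      using fun_cong[OF a(3), of i] a(1,2) unfolding ZNd_def by (cases "i = d") auto
  qed
  ultimately show "y = y' \<and> k = k'" by simp
qed

lemma finite_ZNd: "finite (ZNd N d)"
  by (induction d) (simp_all add: ZNd_0 ZNd_Suc)

lemma zero_ZNd: "N > 0 \<Longrightarrow> (\<lambda>_. 0) \<in> ZNd N d"
  unfolding ZNd_def by auto

lemma sum_ZNd_Suc: "(\<Sum>x\<in>ZNd N (Suc d). F x) = (\<Sum>y\<in>ZNd N d. \<Sum>k<N. F (y(d:=k)))"
proof -
  have "(\<Sum>x\<in>ZNd N (Suc d). F x) = (\<Sum>p\<in>ZNd N d \<times> {..<N}. F ((\<lambda>(y,k). y(d:=k)) p))"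
    unfolding ZNd_Suc by (rule sum.reindex[OF inj_ZNd_Suc, unfolded comp_def])
  also have "\<dots> = (\<Sum>y\<in>ZNd N d. \<Sum>k<N. F (y(d:=k)))"
    by (subst sum.cartesian_product) (simp add: split_def)
  finally show ?thesis .
qed

lemma dotp_upd: "dotp d x (m(d:=k)) = dotp d x m"
  unfolding dotp_def by (intro sum.cong) auto

lemma dotp_Suc: "dotp (Suc d) x m = dotp d x m + int (x d) * int (m d)"
  unfolding dotp_def by simp

lemma orth:
  assumes N: "N > 0" and x: "\<forall>i<d. x i < N" and y: "\<forall>i<d. y i < N"
  shows "(\<Sum>m\<in>ZNd N d. chi N (dotp d x m - dotp d y m)) = (if \<forall>i<d. x i = y i then of_nat N ^ d else 0)"
  using x y
proof (induction d)
  case 0 then show ?case by (simp add: ZNd_0 dotp_def chi_def)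
next
  case (Suc d)
  have IH: "(\<Sum>m\<in>ZNd N d. chi N (dotp d x m - dotp d y m)) = (if \<forall>i<d. x i = y i then of_nat N ^ d else 0)"
    using Suc by auto
  have xd: "x d < N" "y d < N" using Suc.prems by auto
  have ab: "\<bar>int (x d) - int (y d)\<bar> < int N" using xd by (simp add: abs_less_iff)
  have "(\<Sum>m\<in>ZNd N (Suc d). chi N (dotp (Suc d) x m - dotp (Suc d) y m))
      = (\<Sum>m\<in>ZNd N d. \<Sum>k<N. chi N (dotp d x m - dotp d y m) * chi N ((int (x d) - int (y d)) * int k))"
    unfolding sum_ZNd_Suc dotp_Suc dotp_upd
    by (intro sum.cong refl) (simp add: chi_add[symmetric] algebra_simps)
  also have "\<dots> = (\<Sum>m\<in>ZNd N d. chi N (dotp d x m - dotp d y m)) * (\<Sum>k<N. chi N ((int (x d) - int (y d)) * int k))"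
    by (simp add: sum_product)
  also have "\<dots> = (if \<forall>i<Suc d. x i = y i then of_nat N ^ Suc d else 0)"
    unfolding IH geom_chi[OF N ab] by (auto simp: less_Suc_eq)
  finally show ?case .
qed

lemma inversion:
  assumes N: "N > 0" and x: "x \<in> ZNd N d"
  shows "h x = (\<Sum>m\<in>ZNd N d. chi N (dotp d x m) * fourier N d h m)"
proof -
  have "(\<Sum>m\<in>ZNd N d. chi N (dotp d x m) * fourier N d h m)
     = (1 / of_nat N ^ d) * (\<Sum>y\<in>ZNd N d. h y * (\<Sum>m\<in>ZNd N d. chi N (dotp d x m - dotp d y m)))"
  proof -
    have "(\<Sum>m\<in>ZNd N d. chi N (dotp d x m) * fourier N d h m)
       = (\<Sum>m\<in>ZNd N d. (1 / of_nat N ^ d) * (\<Sum>y\<in>ZNd N d. chi N (dotp d x m - dotp d y m) * h y))"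
      unfolding fourier_def
    proof (intro sum.cong refl)
      fix m
      have e: "chi N (dotp d x m) * (\<Sum>y\<in>ZNd N d. chi N (- dotp d y m) * h y)
          = (\<Sum>y\<in>ZNd N d. chi N (dotp d x m - dotp d y m) * h y)"
        unfolding sum_distrib_left
      proof (intro sum.cong refl)
        fix y
        have "chi N (dotp d x m - dotp d y m) = chi N (dotp d x m) * chi N (- dotp d y m)"
          using chi_add[of N "dotp d x m" "- dotp d y m"] by (simp only: diff_conv_add_uminus)
        then show "chi N (dotp d x m) * (chi N (- dotp d y m) * h y) = chi N (dotp d x m - dotp d y m) * h y"
          by (simp only: mult.assoc)
      qed
      have lc: "chi N (dotp d x m) * (1 / of_nat N ^ d * (\<Sum>y\<in>ZNd N d. chi N (- dotp d y m) * h y))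
          = 1 / of_nat N ^ d * (chi N (dotp d x m) * (\<Sum>y\<in>ZNd N d. chi N (- dotp d y m) * h y))"
        by (rule mult.left_commute)
      show "chi N (dotp d x m) * (1 / of_nat N ^ d * (\<Sum>y\<in>ZNd N d. chi N (- dotp d y m) * h y))
          = 1 / of_nat N ^ d * (\<Sum>y\<in>ZNd N d. chi N (dotp d x m - dotp d y m) * h y)"
        unfolding lc e by (rule refl)
    qed
    also have "\<dots> = (1 / of_nat N ^ d) * (\<Sum>m\<in>ZNd N d. \<Sum>y\<in>ZNd N d. chi N (dotp d x m - dotp d y m) * h y)"
      by (simp only: sum_distrib_left)
    also have "\<dots> = (1 / of_nat N ^ d) * (\<Sum>y\<in>ZNd N d. \<Sum>m\<in>ZNd N d. chi N (dotp d x m - dotp d y m) * h y)"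
      by (subst sum.swap) (rule refl)
    also have "\<dots> = (1 / of_nat N ^ d) * (\<Sum>y\<in>ZNd N d. h y * (\<Sum>m\<in>ZNd N d. chi N (dotp d x m - dotp d y m)))"
    proof -
      have "\<And>y. (\<Sum>m\<in>ZNd N d. chi N (dotp d x m - dotp d y m) * h y)
              = h y * (\<Sum>m\<in>ZNd N d. chi N (dotp d x m - dotp d y m))"
        by (subst sum_distrib_right[symmetric]) (rule mult.commute)
      then show ?thesis by simp
    qed
    finally show ?thesis .
  qed
  also have "\<dots> = (1 / of_nat N ^ d) * (\<Sum>y\<in>ZNd N d. if y = x then h y * of_nat N ^ d else 0)"
  proof -
    have xb: "\<forall>i<d. x i < N" using x unfolding ZNd_def by simp
    have "\<And>y. y \<in> ZNd N d \<Longrightarrow> h y * (\<Sum>m\<in>ZNd N d. chi N (dotp d x m - dotp d y m))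
            = (if y = x then h y * of_nat N ^ d else 0)"
    proof -
      fix y assume y: "y \<in> ZNd N d"
      have yb: "\<forall>i<d. y i < N" using y unfolding ZNd_def by simp
      have eq: "(\<forall>i<d. x i = y i) = (y = x)"
      proof
        assume a: "\<forall>i<d. x i = y i"
        show "y = x"
        proof
          fix i show "y i = x i"
            using a x y unfolding ZNd_def by (cases "i < d") auto
        qed
      qed simp
      show "h y * (\<Sum>m\<in>ZNd N d. chi N (dotp d x m - dotp d y m))
            = (if y = x then h y * of_nat N ^ d else 0)"
        unfolding orth[OF N xb yb] eq by simp
    qed
    then show ?thesis by (intro arg_cong[where f="(*) _"] sum.cong refl) 
  qed
  also have "\<dots> = h x" using x N finite_ZNd[of N d] by (simp add: sum.delta)
  finally show ?thesis by simp
qed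

lemma ereal_finite_ge1:
  assumes "1 \<le> p" "p \<noteq> \<infinity>"
  shows "p = ereal (real_of_ereal p) \<and> real_of_ereal p \<ge> 1"
  using assms by (cases p) auto

lemma avg_lemma:
  fixes a :: "'a \<Rightarrow> complex"
  assumes S: "finite S" "S \<noteq> {}" and q: "1 \<le> q"
  shows "(\<Sum>m\<in>S. cmod (a m)) \<le> real (card S) * avg_norm q a S"
proof (cases "q = \<infinity>")
  case True
  have "(\<Sum>m\<in>S. cmod (a m)) \<le> (\<Sum>m\<in>S. Max ((\<lambda>x. cmod (a x)) ` S))"
    using S by (intro sum_mono) auto
  then show ?thesis using True by (simp add: avg_norm_def)
next
  case False
  define r where "r = real_of_ereal q"
  have r: "r \<ge> 1" using ereal_finite_ge1[OF q False] r_def by simp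
  define n where "n = real (card S)"
  have n: "n > 0" using S n_def by (simp add: card_gt_0_iff)
  define \<mu> where "\<mu> = (\<Sum>m\<in>S. (1/n) *\<^sub>R cmod (a m))"
  have mu0: "\<mu> \<ge> 0" unfolding \<mu>_def using n by (intro sum_nonneg) auto
  have J: "\<mu> powr r \<le> (\<Sum>m\<in>S. (1/n) * cmod (a m) powr r)"
    unfolding \<mu>_def
    by (rule convex_on_sum[OF S powr_convex0[OF r]]) (use n n_def in auto)
  have "\<mu> = (\<mu> powr r) powr (1/r)" using r mu0 by (simp add: powr_powr)
  also have "\<dots> \<le> (\<Sum>m\<in>S. (1/n) * cmod (a m) powr r) powr (1/r)"
    using J r by (intro powr_mono2) auto
  also have "\<dots> = avg_norm q a S"
    using False unfolding avg_norm_def r_def n_def by (simp add: sum_distrib_left)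
  finally have "\<mu> \<le> avg_norm q a S" .
  moreover have "(\<Sum>m\<in>S. cmod (a m)) = n * \<mu>"
    unfolding \<mu>_def using n by (simp add: sum_distrib_left)
  ultimately show ?thesis using n unfolding n_def by (simp add: mult_left_mono)
qed

lemma lp_lemma:
  fixes h :: "'a \<Rightarrow> complex"
  assumes A: "finite A" "A \<noteq> {}" and p: "1 \<le> p"
    and K: "K > 0" "real (card {x\<in>A. h x \<noteq> 0}) \<le> K"
    and M: "M \<ge> 0" "\<And>x. x \<in> A \<Longrightarrow> cmod (h x) \<le> M"
  shows "lp_norm p h A \<le> K powr inv_exp p * M"
proof (cases "p = \<infinity>")
  case True
  then show ?thesis using A M K by (simp add: lp_norm_def inv_exp_def)
next
  case False
  define r where "r = real_of_ereal p"
  have r: "r \<ge> 1" using ereal_finite_ge1[OF p False] r_def by simp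
  define T where "T = {x\<in>A. h x \<noteq> 0}"
  have "(\<Sum>x\<in>A. cmod (h x) powr r) = (\<Sum>x\<in>T. cmod (h x) powr r)"
    unfolding T_def using A by (intro sum.mono_neutral_right) auto
  also have "\<dots> \<le> (\<Sum>x\<in>T. M powr r)"
    unfolding T_def using M r by (intro sum_mono powr_mono2) auto
  also have "\<dots> = real (card T) * M powr r" by simp
  also have "\<dots> \<le> K * M powr r" using K T_def by (intro mult_right_mono) auto
  finally have s: "(\<Sum>x\<in>A. cmod (h x) powr r) \<le> K * M powr r" .
  have "lp_norm p h A = (\<Sum>x\<in>A. cmod (h x) powr r) powr (1/r)"
    using False unfolding lp_norm_def r_def by simp
  also have "\<dots> \<le> (K * M powr r) powr (1/r)"
    using s r by (intro powr_mono2) (auto intro: sum_nonneg)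
  also have "\<dots> = K powr (1/r) * (M powr r) powr (1/r)" using K M by (simp add: powr_mult)
  also have "\<dots> = K powr inv_exp p * M"
    using r M False unfolding inv_exp_def r_def
    by (cases "M = 0") (auto simp: powr_powr)
  finally show ?thesis .
qed

theorem corollary4:
  fixes N d :: nat and p q :: ereal and S E :: "(nat \<Rightarrow> nat) set"
    and C :: real and f :: "(nat \<Rightarrow> nat) \<Rightarrow> complex"
  assumes "N \<ge> 2" and "d \<ge> 1"
    and "1 \<le> p" and "p \<le> q"
    and "S \<subseteq> ZNd N d" and "S \<noteq> {}"
    and "C > 0" and "restriction_estimate N d p q S C"
    and "E \<subseteq> ZNd N d" and "\<forall>x\<in>ZNd N d. x \<notin> E \<longrightarrow> f x = 0"
    and "real (card E) powr inv_exp p * real (card S)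
           < real N ^ d / (2 powr inv_exp p * C)"
  shows "\<forall>g :: (nat \<Rightarrow> nat) \<Rightarrow> complex.
           card {x\<in>ZNd N d. g x \<noteq> 0} \<le> card E \<longrightarrow>
           (\<forall>m\<in>ZNd N d - S. fourier N d g m = fourier N d f m) \<longrightarrow>
           (\<forall>x\<in>ZNd N d. g x = f x)"
proof (intro allI impI ballI)
  fix g :: "(nat \<Rightarrow> nat) \<Rightarrow> complex" and x0
  assume gcard: "card {x\<in>ZNd N d. g x \<noteq> 0} \<le> card E"
    and gf: "\<forall>m\<in>ZNd N d - S. fourier N d g m = fourier N d f m"
    and x0: "x0 \<in> ZNd N d"
  show "g x0 = f x0"
  proof (rule ccontr)
    assume ne: "g x0 \<noteq> f x0"
    have N: "N > 0" using assms(1) by simp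
    define Z where "Z = ZNd N d"
    have Zfin: "finite Z" and Zne: "Z \<noteq> {}" using finite_ZNd x0 Z_def by auto
    define h where "h = (\<lambda>x. f x - g x)"
    have hx0: "h x0 \<noteq> 0" using ne h_def by simp
    define G where "G = {x\<in>Z. g x \<noteq> 0}"
    have Efin: "finite E" using assms(9) Zfin Z_def finite_subset by blast
    have supp: "{x\<in>Z. h x \<noteq> 0} \<subseteq> G \<union> E"
      using assms(10) unfolding G_def h_def Z_def by auto
    have "card {x\<in>Z. h x \<noteq> 0} \<le> card (G \<union> E)"
      using supp Efin Zfin G_def by (intro card_mono) auto
    also have "\<dots> \<le> card G + card E" by (rule card_Un_le)
    also have "\<dots> \<le> 2 * card E" using gcard G_def Z_def by simp
    finally have suppc: "real (card {x\<in>Z. h x \<noteq> 0}) \<le> 2 * real (card E)" by linarith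
    have Epos: "card E > 0"
    proof (rule ccontr)
      assume "\<not> card E > 0"
      hence "card {x\<in>Z. h x \<noteq> 0} = 0" using suppc by simp
      hence "{x\<in>Z. h x \<noteq> 0} = {}" using Zfin by simp
      thus False using x0 hx0 Z_def by auto
    qed
    define M where "M = Max ((\<lambda>x. cmod (h x)) ` Z)"
    have Mge: "\<And>x. x \<in> Z \<Longrightarrow> cmod (h x) \<le> M" unfolding M_def using Zfin by auto
    have c0: "cmod (h x0) > 0" using hx0 by simp
    have "cmod (h x0) \<le> M" using Mge x0 Z_def by simp
    hence Mpos: "M > 0" using c0 by linarith
    have "M \<in> (\<lambda>x. cmod (h x)) ` Z" unfolding M_def using Zfin Zne by (intro Max_in) auto
    then obtain xm where xm0: "xm \<in> Z" "M = cmod (h xm)" by blast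
    have xm: "xm \<in> Z" "cmod (h xm) = M" using xm0 by auto
    have fh: "\<And>m. fourier N d h m = fourier N d f m - fourier N d g m"
      unfolding fourier_def h_def by (simp add: sum_subtractf right_diff_distrib)
    have hS: "\<And>m. m \<in> Z - S \<Longrightarrow> fourier N d h m = 0" using gf fh Z_def by simp
    define A where "A = (\<Sum>m\<in>S. cmod (fourier N d h m))"
    have "h xm = (\<Sum>m\<in>Z. chi N (dotp d xm m) * fourier N d h m)"
      using inversion[OF N] xm Z_def by simp
    also have "\<dots> = (\<Sum>m\<in>S. chi N (dotp d xm m) * fourier N d h m)"
      by (rule sum.mono_neutral_right) (use assms(5) Zfin hS Z_def in auto)
    finally have "M \<le> (\<Sum>m\<in>S. cmod (chi N (dotp d xm m) * fourier N d h m))"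
      using xm norm_sum by metis
    hence MA: "M \<le> A" unfolding A_def by (simp add: norm_mult norm_chi)
    have Sfin: "finite S" using assms(5) Zfin Z_def finite_subset by blast
    have q1: "1 \<le> q" using assms(3,4) by simp
    have A1: "A \<le> real (card S) * avg_norm q (fourier N d h) S"
      unfolding A_def by (rule avg_lemma[OF Sfin assms(6) q1])
    have A2: "avg_norm q (fourier N d h) S \<le> C * (1 / real N ^ d) * lp_norm p h Z"
      using assms(8) unfolding restriction_estimate_def Z_def by blast
    have K: "2 * real (card E) > 0" using Epos by simp
    have A3: "lp_norm p h Z \<le> (2 * real (card E)) powr inv_exp p * M"
      by (rule lp_lemma[OF Zfin Zne assms(3) K suppc]) (use Mpos Mge in auto)
    define e where "e = inv_exp p"
    have pw: "(2 * real (card E)) powr e = 2 powr e * real (card E) powr e"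
      by (simp add: powr_mult)
    define X where "X = real (card S) * C * 2 powr e * real (card E) powr e"
    have Npos: "real N ^ d > 0" using N by simp
    have "real (card E) powr e * real (card S) * (2 powr e * C) < real N ^ d"
      using assms(11) assms(7) unfolding e_def by (simp add: pos_less_divide_eq)
    hence X: "X < real N ^ d" unfolding X_def by (simp add: algebra_simps)
    have "M \<le> real (card S) * (C * (1 / real N ^ d) * ((2 * real (card E)) powr e * M))"
    proof -
      have "avg_norm q (fourier N d h) S \<le> C * (1 / real N ^ d) * ((2 * real (card E)) powr e * M)"
        using A2 A3 assms(7) Npos unfolding e_def
        by (smt (verit) divide_pos_pos mult_left_mono mult_pos_pos)
      thus ?thesis using MA A1 by (smt (verit) mult_left_mono of_nat_0_le_iff)
    qed
    also have "\<dots> = X / real N ^ d * M" unfolding X_def pw by (simp add: field_simps)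
    also have "\<dots> < M" using X Npos Mpos by (simp add: field_simps)
    finally show False by simp
  qed
qed

end
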